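(* Let $\eta\in(0,1)$ and $P_A,P_B>0$. The wideband coherent-state MAC with homodyne detection has capacity region (in nats per second) equal to the set of $(R_1,R_2)$, $R_1,R_2\ge0$, with $$R_1\le\sqrt{\frac{\eta P_A}{\pi\hbar}},\qquad R_2\le\sqrt{\frac{(1-\eta)P_B}{\pi\hbar}},\qquad R_1+R_2\le\sqrt{\frac{\eta P_A+(1-\eta)P_B}{\pi\hbar}},$$ and the wideband coherent-state MAC with heterodyne detection has the same capacity region.
   Context: Wideband model (continuum limit of frequency bins of width $\Delta=2\pi/T\to0$): Alice and Bob choose photon-number allocations $\bar n_A(\omega),\bar n_B(\omega)\ge0$ on $\omega\in(0,\infty)$ subject to the power constraints $\int_0^\infty\hbar\omega\,\bar n_A(\omega)\,\frac{d\omega}{2\pi}\le P_A$ and $\int_0^\infty\hbar\omega\,\bar n_B(\omega)\,\frac{d\omega}{2\pi}\le P_B$. The transmissivity $\eta$ is frequency independent. For homodyne detection, for given allocations the achievable set is $\{R_1\le\int_0^\infty\frac12\log(1+4\eta\bar n_A(\omega))\frac{d\omega}{2\pi},\ R_2\le\int_0^\infty\frac12\log(1+4(1-\eta)\bar n_B(\omega))\frac{d\omega}{2\pi},\ R_1+R_2\le\int_0^\infty\frac12\log(1+4\eta\bar n_A(\omega)+4(1-\eta)\bar n_B(\omega))\frac{d\omega}{2\pi}\}$; for heterodyne detection the integrands are replaced by $\log(1+\eta\bar n_A)$, $\log(1+(1-\eta)\bar n_B)$, $\log(1+\eta\bar n_A+(1-\eta)\bar n_B)$. The capacity region is the convex hull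 of the union of these sets over admissible allocations. Logarithms are natural. *)

theory Defs
  imports "HOL-Analysis.Analysis"
begin

definition freq_integral :: "(real \<Rightarrow> real) \<Rightarrow> ennreal" where
  "freq_integral f = (\<integral>\<^sup>+ \<omega>. indicator {0<..} \<omega> * ennreal (f \<omega> / (2 * pi)) \<partial>lborel)"

text \<open>Admissible photon-number allocation under power constraint P (hbar the reduced
  Planck constant).\<close>
definition admissible :: "real \<Rightarrow> real \<Rightarrow> (real \<Rightarrow> real) \<Rightarrow> bool" where
  "admissible hbar P n \<longleftrightarrow>
     n \<in> borel_measurable lborel \<and> (\<forall>\<omega>>0. 0 \<le> n \<omega>) \<and>
     freq_integral (\<lambda>\<omega>. hbar * \<omega> * n \<omega>) \<le> ennreal P"

definition homodyne_set :: "real \<Rightarrow> (real \<Rightarrow> real) \<Rightarrow> (real \<Rightarrow> real) \<Rightarrow> (real \<times> real) set" where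
  "homodyne_set \<eta> nA nB = {(R1, R2). 0 \<le> R1 \<and> 0 \<le> R2 \<and>
     ennreal R1 \<le> freq_integral (\<lambda>\<omega>. (1/2) * ln (1 + 4 * \<eta> * nA \<omega>)) \<and>
     ennreal R2 \<le> freq_integral (\<lambda>\<omega>. (1/2) * ln (1 + 4 * (1 - \<eta>) * nB \<omega>)) \<and>
     ennreal (R1 + R2) \<le> freq_integral (\<lambda>\<omega>. (1/2) * ln (1 + 4 * \<eta> * nA \<omega> + 4 * (1 - \<eta>) * nB \<omega>))}"

definition heterodyne_set :: "real \<Rightarrow> (real \<Rightarrow> real) \<Rightarrow> (real \<Rightarrow> real) \<Rightarrow> (real \<times> real) set" where
  "heterodyne_set \<eta> nA nB = {(R1, R2). 0 \<le> R1 \<and> 0 \<le> R2 \<and>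
     ennreal R1 \<le> freq_integral (\<lambda>\<omega>. ln (1 + \<eta> * nA \<omega>)) \<and>
     ennreal R2 \<le> freq_integral (\<lambda>\<omega>. ln (1 + (1 - \<eta>) * nB \<omega>)) \<and>
     ennreal (R1 + R2) \<le> freq_integral (\<lambda>\<omega>. ln (1 + \<eta> * nA \<omega> + (1 - \<eta>) * nB \<omega>))}"

definition capacity_region ::
  "(real \<Rightarrow> (real \<Rightarrow> real) \<Rightarrow> (real \<Rightarrow> real) \<Rightarrow> (real \<times> real) set) \<Rightarrow>
   real \<Rightarrow> real \<Rightarrow> real \<Rightarrow> real \<Rightarrow> (real \<times> real) set" where
  "capacity_region S hbar \<eta> PA PB =
     convex hull (\<Union> {S \<eta> nA nB | nA nB. admissible hbar PA nA \<and> admissible hbar PB nB})"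

end

theory Submission
  imports Defs "HOL-Real_Asymp.Real_Asymp"
begin
lemma ftc_nn:
  fixes F f :: "real \<Rightarrow> real" and c :: real
  assumes c: "0 < c" and cont: "continuous_on {0..c} F"
    and der: "\<And>x. 0<x \<Longrightarrow> x<c \<Longrightarrow> (F has_real_derivative f x) (at x)"
    and nn: "\<And>x. 0<x \<Longrightarrow> x<c \<Longrightarrow> 0 \<le> f x"
  shows "(\<integral>\<^sup>+x. ennreal (if 0<x \<and> x<c then f x else 0) \<partial>lborel) = ennreal (F c - F 0)"
proof -
  have I0: "(f has_integral F c - F 0) {0..c}"
    apply (rule fundamental_theorem_of_calculus_interior)
    using c cont der by (auto simp: has_real_derivative_iff_has_vector_derivative[symmetric])
  have I: "((\<lambda>x. if 0<x \<and> x<c then f x else 0) has_integral F c - F 0) {0..c}"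
    by (rule has_integral_spike_finite[of "{0,c}", OF _ _ I0]) auto
  have "(\<integral>\<^sup>+x. ennreal (if 0<x \<and> x<c then f x else 0) \<partial>lborel)
     = (\<integral>\<^sup>+x. ennreal (if 0<x \<and> x<c then f x else 0) * indicator {0..c} x \<partial>lborel)"
    by (rule nn_integral_cong) (auto simp: indicator_def)
  also have "\<dots> = ennreal (F c - F 0)"
    by (rule nn_integral_has_integral_lebesgue'[OF _ I]) (auto intro: nn)
  finally show ?thesis .
qed

lemma ftc_gen:
  fixes c k d e :: real
  assumes c: "0 < c" and nn: "\<And>x. 0<x \<Longrightarrow> x<c \<Longrightarrow> 0 \<le> k*(ln(c/x)-1) + 2*d*x + e"
  shows "(\<integral>\<^sup>+x. ennreal (if 0<x \<and> x<c then (k*(ln(c/x)-1) + 2*d*x + e)/(2*pi) else 0) \<partial>lborel)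
      = ennreal ((d*c^2 + e*c)/(2*pi))"
proof -
  define F where "F = (\<lambda>x::real. (k*(x*ln(c/x)) + d*x^2 + e*x)/(2*pi))"
  have lim: "((\<lambda>x. x*ln(c/x)) \<longlongrightarrow> 0) (at_right 0)"
    using c by real_asymp
  have "continuous_on {0..c} F"
  proof (clarsimp simp: continuous_on_eq_continuous_within)
    fix x assume x: "0 \<le> x" "x \<le> c"
    show "continuous (at x within {0..c}) F"
    proof (cases "x = 0")
      case True
      have "(F \<longlongrightarrow> (k*0 + d*0^2 + e*0)/(2*pi)) (at_right 0)"
        unfolding F_def by (intro tendsto_intros lim) (auto intro: tendsto_ident_at)
      then have "(F \<longlongrightarrow> F 0) (at_right 0)" by (simp add: F_def)
      then have "(F \<longlongrightarrow> F 0) (at 0 within {0..c})"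
        using c by (simp add: at_within_Icc_at_right)
      then show ?thesis using True by (simp add: continuous_within)
    next
      case False
      then have "x > 0" using x by simp
      then have "isCont F x" unfolding F_def using c by (auto intro!: continuous_intros)
      then show ?thesis by (simp add: continuous_at_imp_continuous_within)
    qed
  qed
  moreover have "(F has_real_derivative (k*(ln(c/x)-1) + 2*d*x + e)/(2*pi)) (at x)" if "0<x" "x<c" for x
    unfolding F_def using that c
    by (auto intro!: derivative_eq_intros simp: field_simps power2_eq_square)
  ultimately have "(\<integral>\<^sup>+x. ennreal (if 0<x \<and> x<c then (k*(ln(c/x)-1) + 2*d*x + e)/(2*pi) else 0) \<partial>lborel)
      = ennreal (F c - F 0)"
    by (intro ftc_nn c) (auto intro!: divide_nonneg_pos nn)
  also have "F c - F 0 = (d*c^2 + e*c)/(2*pi)" unfolding F_def using c by simp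
  finally show ?thesis .
qed

lemma freq_cmult:
  assumes k: "0 \<le> k" and f: "f \<in> borel_measurable borel"
  shows "freq_integral (\<lambda>\<omega>. k * f \<omega>) = ennreal k * freq_integral f"
proof -
  note [measurable] = f
  have "freq_integral (\<lambda>\<omega>. k * f \<omega>)
      = (\<integral>\<^sup>+\<omega>. ennreal k * (indicator {0<..} \<omega> * ennreal (f \<omega>/(2*pi))) \<partial>lborel)"
    unfolding freq_integral_def
  proof (rule nn_integral_cong)
    fix \<omega> :: real
    have "ennreal (k * f \<omega> / (2*pi)) = ennreal k * ennreal (f \<omega>/(2*pi))"
      using k by (simp add: ennreal_mult'[symmetric])
    then show "indicator {0<..} \<omega> * ennreal (k * f \<omega> / (2 * pi)) =
         ennreal k * (indicator {0<..} \<omega> * ennreal (f \<omega> / (2 * pi)))"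
      by (simp add: mult_ac)
  qed
  also have "\<dots> = ennreal k * freq_integral f"
    unfolding freq_integral_def by (rule nn_integral_cmult) measurable
  finally show ?thesis .
qed

lemma freq_add:
  assumes f[measurable]: "f \<in> borel_measurable borel" and g[measurable]: "g \<in> borel_measurable borel"
    and fn: "\<And>\<omega>. 0 < \<omega> \<Longrightarrow> 0 \<le> f \<omega>" and gn: "\<And>\<omega>. 0 < \<omega> \<Longrightarrow> 0 \<le> g \<omega>"
  shows "freq_integral (\<lambda>\<omega>. f \<omega> + g \<omega>) = freq_integral f + freq_integral g"
proof -
  have "freq_integral (\<lambda>\<omega>. f \<omega> + g \<omega>)
      = (\<integral>\<^sup>+\<omega>. indicator {0<..} \<omega> * ennreal (f \<omega>/(2*pi)) + indicator {0<..} \<omega> * ennreal (g \<omega>/(2*pi)) \<partial>lborel)"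
    unfolding freq_integral_def
  proof (rule nn_integral_cong)
    fix \<omega> :: real
    show "indicator {0<..} \<omega> * ennreal ((f \<omega> + g \<omega>) / (2 * pi)) =
         indicator {0<..} \<omega> * ennreal (f \<omega> / (2 * pi)) + indicator {0<..} \<omega> * ennreal (g \<omega> / (2 * pi))"
    proof (cases "0 < \<omega>")
      case True
      then show ?thesis using fn[OF True] gn[OF True]
        by (simp add: add_divide_distrib ennreal_plus[symmetric] del: ennreal_plus)
    qed simp
  qed
  also have "\<dots> = freq_integral f + freq_integral g"
    unfolding freq_integral_def by (rule nn_integral_add) measurable
  finally show ?thesis .
qed

lemma freq_mono:
  assumes "\<And>\<omega>. 0 < \<omega> \<Longrightarrow> f \<omega> \<le> g \<omega>"
  shows "freq_integral f \<le> freq_integral g"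
  unfolding freq_integral_def
  by (rule nn_integral_mono) (auto simp: indicator_def intro!: ennreal_leI divide_right_mono assms)

definition yc :: "real \<Rightarrow> real \<Rightarrow> real" where
  "yc c \<omega> = (if \<omega> < c then c/\<omega> - 1 else 0)"

lemma yc_meas[measurable]: "yc c \<in> borel_measurable borel"
  unfolding yc_def by measurable

lemma yc_nonneg: "0 < \<omega> \<Longrightarrow> 0 \<le> yc c \<omega>"
  unfolding yc_def by (auto simp: field_simps)

lemma yc_mono: "0 < \<omega> \<Longrightarrow> c1 \<le> c2 \<Longrightarrow> yc c1 \<omega> \<le> yc c2 \<omega>"
  unfolding yc_def by (auto simp: field_simps divide_right_mono)

lemma ach_rate:
  assumes c: "0 < c"
  shows "freq_integral (\<lambda>\<omega>. ln (1 + yc c \<omega>)) = ennreal (c/(2*pi))"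
proof -
  have "freq_integral (\<lambda>\<omega>. ln (1 + yc c \<omega>))
     = (\<integral>\<^sup>+x. ennreal (if 0<x \<and> x<c then (1*(ln(c/x)-1) + 2*0*x + 1)/(2*pi) else 0) \<partial>lborel)"
    unfolding freq_integral_def by (rule nn_integral_cong) (auto simp: yc_def indicator_def)
  also have "\<dots> = ennreal ((0*c^2 + 1*c)/(2*pi))"
    using c by (intro ftc_gen) auto
  finally show ?thesis by simp
qed

lemma ach_pow:
  assumes c: "0 < c"
  shows "freq_integral (\<lambda>\<omega>. \<omega> * yc c \<omega>) = ennreal (c^2/(4*pi))"
proof -
  have "freq_integral (\<lambda>\<omega>. \<omega> * yc c \<omega>)
     = (\<integral>\<^sup>+x. ennreal (if 0<x \<and> x<c then (0*(ln(c/x)-1) + 2*(-1/2)*x + c)/(2*pi) else 0) \<partial>lborel)"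
    unfolding freq_integral_def by (rule nn_integral_cong) (auto simp: yc_def indicator_def field_simps)
  also have "\<dots> = ennreal (((-1/2)*c^2 + c*c)/(2*pi))"
    using c by (intro ftc_gen) auto
  also have "((-1/2)*c^2 + c*c)/(2*pi) = c^2/(4*pi)"
    by (simp add: field_simps power2_eq_square)
  finally show ?thesis .
qed


lemma ub_core:
  assumes y[measurable]: "y \<in> borel_measurable borel" and yn: "\<And>\<omega>. 0 < \<omega> \<Longrightarrow> 0 \<le> y \<omega>"
    and E: "freq_integral (\<lambda>\<omega>. \<omega> * y \<omega>) \<le> ennreal E" and E0: "0 < E"
  shows "freq_integral (\<lambda>\<omega>. ln (1 + y \<omega>)) \<le> ennreal (sqrt (E/pi))"
proof -
  define c where "c = sqrt (4*pi*E)"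
  have c0: "0 < c" unfolding c_def using E0 by simp
  have c2: "c^2 = 4*pi*E" unfolding c_def using E0 by simp
  define h where "h = (\<lambda>x. if 0<x \<and> x<c then (1*(ln(c/x)-1) + 2*(1/(2*c))*x + 0)/(2*pi) else 0)"
  have hm[measurable]: "h \<in> borel_measurable borel" unfolding h_def by measurable
  have pt: "indicator {0<..} x * ennreal (ln (1 + y x) / (2*pi))
      \<le> ennreal (1/c) * (indicator {0<..} x * ennreal (x * y x / (2*pi))) + ennreal (h x)" for x
  proof (cases "0 < x")
    case False then show ?thesis by simp
  next
    case True
    have y0: "0 \<le> y x" using yn[OF True] .
    have real: "ln (1 + y x) / (2*pi) \<le> (1/c) * (x * y x / (2*pi)) + h x"
    proof (cases "x < c")
      case True
      have z: "0 < (1 + y x) * x / c" using \<open>0 < x\<close> y0 c0 by simp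
      have "ln ((1 + y x) * x / c) \<le> (1 + y x) * x / c - 1" by (rule ln_le_minus_one[OF z])
      moreover have "ln ((1 + y x) * x / c) = ln (1 + y x) - ln (c/x)"
        using \<open>0 < x\<close> y0 c0 by (simp add: ln_div ln_mult)
      moreover have "(1 + y x) * x / c = x/c + x * y x / c" using c0 by (simp add: field_simps)
      ultimately have "ln (1 + y x) \<le> x * y x / c + (ln (c/x) - 1 + x/c)"
        by linarith
      then show ?thesis using True \<open>0 < x\<close> unfolding h_def
        by (simp add: field_simps)
    next
      case False
      have "ln (1 + y x) \<le> y x" using y0 by (rule ln_add_one_self_le_self)
      also have "y x \<le> x * y x / c" using False y0 c0 by (simp add: field_simps mult_right_mono)
      finally show ?thesis using False unfolding h_def by (simp add: divide_right_mono field_simps)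
    qed
    have hn: "0 \<le> h x"
    proof -
      have "0 \<le> ln (c/x) - 1 + x/c" if "x < c"
      proof -
        have "ln (x/c) \<le> x/c - 1" using \<open>0 < x\<close> c0 by (intro ln_le_minus_one) simp
        moreover have "ln (x/c) = - ln (c/x)" using \<open>0 < x\<close> c0 by (simp add: ln_div)
        ultimately show ?thesis by simp
      qed
      then show ?thesis unfolding h_def by auto
    qed
    have "ennreal (ln (1 + y x) / (2*pi)) \<le> ennreal ((1/c) * (x * y x / (2*pi)) + h x)"
      by (rule ennreal_leI[OF real])
    also have "\<dots> = ennreal (1/c) * ennreal (x * y x / (2*pi)) + ennreal (h x)"
      using c0 \<open>0 < x\<close> y0 hn by (simp add: ennreal_mult'[symmetric])
    finally show ?thesis using True by simp
  qed
  have "freq_integral (\<lambda>\<omega>. ln (1 + y \<omega>))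
      \<le> (\<integral>\<^sup>+x. ennreal (1/c) * (indicator {0<..} x * ennreal (x * y x / (2*pi))) + ennreal (h x) \<partial>lborel)"
    unfolding freq_integral_def by (rule nn_integral_mono) (rule pt)
  also have "\<dots> = ennreal (1/c) * freq_integral (\<lambda>\<omega>. \<omega> * y \<omega>) + (\<integral>\<^sup>+x. ennreal (h x) \<partial>lborel)"
    unfolding freq_integral_def
    by (subst nn_integral_add; (subst nn_integral_cmult)?) (measurable; simp)+
  also have "(\<integral>\<^sup>+x. ennreal (h x) \<partial>lborel) = ennreal (((1/(2*c))*c^2 + 0*c)/(2*pi))"
    unfolding h_def
  proof (rule ftc_gen[OF c0])
    fix x assume x: "0 < x" "x < c"
    have "ln (x/c) \<le> x/c - 1" using x c0 by (intro ln_le_minus_one) simp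
    moreover have "ln (x/c) = - ln (c/x)" using x c0 by (simp add: ln_div)
    ultimately show "0 \<le> 1 * (ln (c / x) - 1) + 2 * (1 / (2 * c)) * x + 0" using c0 by simp
  qed
  also have "ennreal (1/c) * freq_integral (\<lambda>\<omega>. \<omega> * y \<omega>) \<le> ennreal (1/c) * ennreal E"
    by (rule mult_left_mono[OF E]) simp
  also have "ennreal (1/c) * ennreal E + ennreal (((1/(2*c))*c^2 + 0*c)/(2*pi))
     = ennreal (E/c + c/(4*pi))"
  proof -
    have "ennreal (1/c) * ennreal E = ennreal (E/c)" using c0 by (simp add: ennreal_mult'[symmetric])
    moreover have "((1/(2*c))*c^2 + 0*c)/(2*pi) = c/(4*pi)" using c0 by (simp add: power2_eq_square field_simps)
    ultimately show ?thesis using c0 E0 by (simp del: ennreal_plus add: ennreal_plus[symmetric])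
  qed
  also have "E/c + c/(4*pi) = sqrt (E/pi)"
  proof -
    have "E/c = c/(4*pi)" using c0 c2 by (simp add: field_simps power2_eq_square)
    then have "E/c + c/(4*pi) = c/(2*pi)" by simp
    also have "c/(2*pi) = sqrt (E/pi)"
      by (rule real_sqrt_unique[symmetric]) (use c0 c2 in \<open>simp_all add: power_divide field_simps power2_eq_square\<close>)
    finally show ?thesis .
  qed
  finally show ?thesis by simp
qed


lemma en1: "ennreal s \<le> ennreal a + X \<Longrightarrow> 0 \<le> a \<Longrightarrow> ennreal (s - a) \<le> X"
  by (metis ennreal_minus ennreal_minus_le_iff top_neq_ennreal)

lemma en2: "ennreal y = ennreal x + X \<Longrightarrow> 0 \<le> x \<Longrightarrow> x \<le> y \<Longrightarrow> X = ennreal (y - x)"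
  by (metis ennreal_add_diff_cancel_left ennreal_minus top_neq_ennreal)

lemma gen_ub:
  assumes n[measurable]: "n \<in> borel_measurable borel" and nn: "\<And>\<omega>. 0<\<omega> \<Longrightarrow> 0 \<le> n \<omega>"
    and P: "freq_integral (\<lambda>\<omega>. hbar*\<omega>*n \<omega>) \<le> ennreal P"
    and P0: "0<P" and h0: "0<hbar" and g0: "0<g" and k0: "0<\<kappa>"
  shows "freq_integral (\<lambda>\<omega>. \<kappa> * ln (1 + g * n \<omega>)) \<le> ennreal (\<kappa> * sqrt (g*P/(hbar*pi)))"
proof -
  have "freq_integral (\<lambda>\<omega>. \<omega> * (g * n \<omega>)) = freq_integral (\<lambda>\<omega>. (g/hbar) * (hbar*\<omega>*n \<omega>))"
    using h0 by (intro arg_cong[where f=freq_integral]) (auto simp: fun_eq_iff field_simps)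
  also have "\<dots> = ennreal (g/hbar) * freq_integral (\<lambda>\<omega>. hbar*\<omega>*n \<omega>)"
    using g0 h0 by (intro freq_cmult) auto
  also have "\<dots> \<le> ennreal (g/hbar) * ennreal P"
    by (rule mult_left_mono[OF P]) simp
  also have "\<dots> = ennreal (g*P/hbar)" using g0 h0 by (simp add: ennreal_mult'[symmetric])
  finally have E: "freq_integral (\<lambda>\<omega>. \<omega> * (g * n \<omega>)) \<le> ennreal (g*P/hbar)" .
  have "freq_integral (\<lambda>\<omega>. ln (1 + g * n \<omega>)) \<le> ennreal (sqrt (g*P/hbar/pi))"
    by (rule ub_core[OF _ _ E]) (use nn g0 P0 h0 in auto)
  then have "freq_integral (\<lambda>\<omega>. \<kappa> * ln (1 + g * n \<omega>)) \<le> ennreal \<kappa> * ennreal (sqrt (g*P/hbar/pi))"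
    using k0 by (subst freq_cmult) (auto intro: mult_left_mono)
  also have "\<dots> = ennreal (\<kappa> * sqrt (g*P/(hbar*pi)))"
    using k0 by (simp add: ennreal_mult'[symmetric])
  finally show ?thesis .
qed

lemma kappa_sqrt:
  assumes "0 < \<kappa>" "\<kappa>^2 * m = 1" "0 \<le> X"
  shows "\<kappa> * sqrt (m * X) = sqrt X"
proof -
  have "\<kappa> * sqrt (m * X) = sqrt (\<kappa>^2) * sqrt (m * X)" using assms by simp
  also have "\<dots> = sqrt (\<kappa>^2 * m * X)" by (simp add: real_sqrt_mult mult.assoc)
  finally show ?thesis using assms by simp
qed


lemma corner:
  fixes \<kappa> m hbar gA gB QA QB :: real
  assumes k0: "0 < \<kappa>" and m0: "0 < m" and km: "\<kappa>^2 * m = 1" and h0: "0 < hbar"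
    and gA: "0 < gA" and gB: "0 < gB" and QA: "0 < QA" and QB: "0 < QB"
  shows "\<exists>nA nB. admissible hbar QA nA \<and> admissible hbar QB nB \<and>
     freq_integral (\<lambda>\<omega>. \<kappa> * ln (1 + m*gA*nA \<omega>)) = ennreal (sqrt (gA*QA/(pi*hbar))) \<and>
     ennreal (sqrt ((gA*QA + gB*QB)/(pi*hbar)) - sqrt (gA*QA/(pi*hbar)))
        \<le> freq_integral (\<lambda>\<omega>. \<kappa> * ln (1 + m*gB*nB \<omega>)) \<and>
     freq_integral (\<lambda>\<omega>. \<kappa> * ln (1 + m*gA*nA \<omega> + m*gB*nB \<omega>))
        = ennreal (sqrt ((gA*QA + gB*QB)/(pi*hbar)))"
proof -
  define a where "a = sqrt (gA*QA/(pi*hbar))"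
  define sv where "sv = sqrt ((gA*QA + gB*QB)/(pi*hbar))"
  have a0: "0 < a" unfolding a_def using gA QA h0 by simp
  have sv0: "0 < sv" unfolding sv_def using gA QA gB QB h0 by (simp add: add_pos_pos)
  have a2: "a^2 = gA*QA/(pi*hbar)" unfolding a_def using gA QA h0 by simp
  have sv2: "sv^2 = (gA*QA + gB*QB)/(pi*hbar)" unfolding sv_def using gA QA gB QB h0
    by (simp add: add_pos_pos less_imp_le)
  have as: "a \<le> sv" unfolding a_def sv_def using gB QB h0
    by (intro real_sqrt_le_mono divide_right_mono) auto
  have meq: "m = 1/\<kappa>^2" using km k0 by (simp add: field_simps)
  define c1 where "c1 = 2*pi*a/\<kappa>"
  define c2 where "c2 = 2*pi* sv/\<kappa>"
  have c10: "0 < c1" and c20: "0 < c2" unfolding c1_def c2_def using a0 sv0 k0 by auto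
  have c12: "c1 \<le> c2" unfolding c1_def c2_def using as k0 by (simp add: divide_right_mono)
  define nA where "nA = (\<lambda>\<omega>. yc c1 \<omega> / (m*gA))"
  define nB where "nB = (\<lambda>\<omega>. (yc c2 \<omega> - yc c1 \<omega>) / (m*gB))"
  have nAm[measurable]: "nA \<in> borel_measurable borel" unfolding nA_def by measurable
  have nBm[measurable]: "nB \<in> borel_measurable borel" unfolding nB_def by measurable
  have dm[measurable]: "(\<lambda>\<omega>. yc c2 \<omega> - yc c1 \<omega>) \<in> borel_measurable borel" by measurable
  have dn: "0 \<le> yc c2 \<omega> - yc c1 \<omega>" if "0 < \<omega>" for \<omega> using yc_mono[OF that c12] by simp
  have nAn: "0 \<le> nA \<omega>" if "0 < \<omega>" for \<omega>
    unfolding nA_def using yc_nonneg[OF that] m0 gA by simp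
  have nBn: "0 \<le> nB \<omega>" if "0 < \<omega>" for \<omega>
    unfolding nB_def using dn[OF that] m0 gB by simp
  have "freq_integral (\<lambda>\<omega>. hbar*\<omega>*nA \<omega>) = freq_integral (\<lambda>\<omega>. (hbar/(m*gA)) * (\<omega> * yc c1 \<omega>))"
    unfolding nA_def by (intro arg_cong[where f=freq_integral]) (auto simp: fun_eq_iff)
  also have "\<dots> = ennreal (hbar/(m*gA)) * ennreal (c1^2/(4*pi))"
    using h0 m0 gA c10 by (subst freq_cmult) (auto simp: ach_pow)
  also have "\<dots> = ennreal (hbar/(m*gA) * (c1^2/(4*pi)))"
    using h0 m0 gA by (simp add: ennreal_mult'[symmetric])
  also have "hbar/(m*gA) * (c1^2/(4*pi)) = QA"
    unfolding c1_def meq using a2 h0 gA k0 by (simp add: field_simps power2_eq_square)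
  finally have powA: "freq_integral (\<lambda>\<omega>. hbar*\<omega>*nA \<omega>) = ennreal QA" .
  have "freq_integral (\<lambda>\<omega>. \<omega> * yc c2 \<omega>)
      = freq_integral (\<lambda>\<omega>. \<omega> * yc c1 \<omega> + \<omega> * (yc c2 \<omega> - yc c1 \<omega>))"
    by (intro arg_cong[where f=freq_integral]) (auto simp: fun_eq_iff algebra_simps)
  also have "\<dots> = freq_integral (\<lambda>\<omega>. \<omega> * yc c1 \<omega>) + freq_integral (\<lambda>\<omega>. \<omega> * (yc c2 \<omega> - yc c1 \<omega>))"
    by (rule freq_add) (auto intro!: mult_nonneg_nonneg yc_nonneg dn)
  finally have "ennreal (c2^2/(4*pi)) = ennreal (c1^2/(4*pi)) + freq_integral (\<lambda>\<omega>. \<omega> * (yc c2 \<omega> - yc c1 \<omega>))"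
    using c10 c20 by (simp add: ach_pow)
  then have dpow: "freq_integral (\<lambda>\<omega>. \<omega> * (yc c2 \<omega> - yc c1 \<omega>)) = ennreal (c2^2/(4*pi) - c1^2/(4*pi))"
    by (rule en2) (use c10 c12 in \<open>auto intro!: divide_right_mono power_mono\<close>)
  have "freq_integral (\<lambda>\<omega>. hbar*\<omega>*nB \<omega>) = freq_integral (\<lambda>\<omega>. (hbar/(m*gB)) * (\<omega> * (yc c2 \<omega> - yc c1 \<omega>)))"
    unfolding nB_def by (intro arg_cong[where f=freq_integral]) (auto simp: fun_eq_iff)
  also have "\<dots> = ennreal (hbar/(m*gB)) * ennreal (c2^2/(4*pi) - c1^2/(4*pi))"
    using h0 m0 gB by (subst freq_cmult) (auto simp: dpow)
  also have "\<dots> = ennreal (hbar/(m*gB) * (c2^2/(4*pi) - c1^2/(4*pi)))"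
    using h0 m0 gB by (simp add: ennreal_mult'[symmetric])
  also have "hbar/(m*gB) * (c2^2/(4*pi) - c1^2/(4*pi)) = QB"
    unfolding c1_def c2_def meq using a2 sv2 h0 gB k0 by (simp add: field_simps power2_eq_square)
  finally have powB: "freq_integral (\<lambda>\<omega>. hbar*\<omega>*nB \<omega>) = ennreal QB" .
  have admA: "admissible hbar QA nA" unfolding admissible_def using powA nAn by auto
  have admB: "admissible hbar QB nB" unfolding admissible_def using powB nBn by auto
  have rate: "freq_integral (\<lambda>\<omega>. \<kappa> * ln (1 + yc c \<omega>)) = ennreal (\<kappa> * c/(2*pi))" if "0 < c" for c
    using k0 that by (subst freq_cmult) (auto simp: ach_rate ennreal_mult'[symmetric])
  have RA: "freq_integral (\<lambda>\<omega>. \<kappa> * ln (1 + m*gA*nA \<omega>)) = ennreal a"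
  proof -
    have "(\<lambda>\<omega>. \<kappa> * ln (1 + m*gA*nA \<omega>)) = (\<lambda>\<omega>. \<kappa> * ln (1 + yc c1 \<omega>))"
      unfolding nA_def using m0 gA by (auto simp: fun_eq_iff)
    then show ?thesis using rate[OF c10] k0 by (simp add: c1_def)
  qed
  have sumeq: "(\<lambda>\<omega>. \<kappa> * ln (1 + m*gA*nA \<omega> + m*gB*nB \<omega>)) = (\<lambda>\<omega>. \<kappa> * ln (1 + yc c2 \<omega>))"
    unfolding nA_def nB_def using m0 gA gB by (auto simp: fun_eq_iff)
  have RS: "freq_integral (\<lambda>\<omega>. \<kappa> * ln (1 + m*gA*nA \<omega> + m*gB*nB \<omega>)) = ennreal sv"
    unfolding sumeq using rate[OF c20] k0 by (simp add: c2_def)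
  have Beq: "(\<lambda>\<omega>. \<kappa> * ln (1 + m*gB*nB \<omega>)) = (\<lambda>\<omega>. \<kappa> * ln (1 + (yc c2 \<omega> - yc c1 \<omega>)))"
    unfolding nB_def using m0 gB by (auto simp: fun_eq_iff)
  have "ennreal sv = freq_integral (\<lambda>\<omega>. \<kappa> * ln (1 + yc c2 \<omega>))"
    using RS sumeq by simp
  also have "\<dots> \<le> freq_integral (\<lambda>\<omega>. \<kappa> * ln (1 + yc c1 \<omega>) + \<kappa> * ln (1 + (yc c2 \<omega> - yc c1 \<omega>)))"
  proof (rule freq_mono)
    fix \<omega> :: real assume w: "0 < \<omega>"
    define u where "u = yc c1 \<omega>"
    define v where "v = yc c2 \<omega> - yc c1 \<omega>"
    have u0: "0 \<le> u" unfolding u_def by (rule yc_nonneg[OF w])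
    have v0: "0 \<le> v" unfolding v_def by (rule dn[OF w])
    have "ln (1 + (u + v)) \<le> ln ((1 + u) * (1 + v))"
      using u0 v0 by (subst ln_le_cancel_iff) (auto simp: algebra_simps intro: add_pos_nonneg)
    also have "\<dots> = ln (1 + u) + ln (1 + v)" using u0 v0 by (simp add: ln_mult)
    finally have "ln (1 + (u + v)) \<le> ln (1 + u) + ln (1 + v)" .
    then have "\<kappa> * ln (1 + (u + v)) \<le> \<kappa> * ln (1 + u) + \<kappa> * ln (1 + v)"
      using k0 by (simp add: distrib_left[symmetric])
    then show "\<kappa> * ln (1 + yc c2 \<omega>) \<le> \<kappa> * ln (1 + yc c1 \<omega>) + \<kappa> * ln (1 + (yc c2 \<omega> - yc c1 \<omega>))"
      unfolding u_def v_def by simp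
  qed
  also have "\<dots> = freq_integral (\<lambda>\<omega>. \<kappa> * ln (1 + yc c1 \<omega>)) + freq_integral (\<lambda>\<omega>. \<kappa> * ln (1 + (yc c2 \<omega> - yc c1 \<omega>)))"
    by (rule freq_add) (use k0 yc_nonneg dn in auto)
  also have "freq_integral (\<lambda>\<omega>. \<kappa> * ln (1 + yc c1 \<omega>)) = ennreal a"
    using rate[OF c10] k0 by (simp add: c1_def)
  finally have "ennreal sv \<le> ennreal a + freq_integral (\<lambda>\<omega>. \<kappa> * ln (1 + m*gB*nB \<omega>))"
    unfolding Beq .
  then have RB: "ennreal (sv - a) \<le> freq_integral (\<lambda>\<omega>. \<kappa> * ln (1 + m*gB*nB \<omega>))"
    by (rule en1) (use a0 in simp)
  show ?thesis using admA admB RA RB RS unfolding a_def sv_def by blast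
qed


lemma pent_hull:
  fixes H :: "(real \<times> real) set"
  assumes H: "convex H" and O: "(0,0) \<in> H" and A: "(a,0) \<in> H" and C1: "(a,sv-a) \<in> H"
    and C2: "(sv-b,b) \<in> H" and B: "(0,b) \<in> H"
    and a0: "0 < a" and b0: "0 < b" and as: "a \<le> sv" and bs: "b \<le> sv" and sab: "sv \<le> a + b"
    and x0: "0 \<le> x" and y0: "0 \<le> y" and xa: "x \<le> a" and yb: "y \<le> b" and xys: "x + y \<le> sv"
  shows "(x,y) \<in> H"
proof -
  have seg: "(1-t) *\<^sub>R u + t *\<^sub>R v \<in> H" if "u \<in> H" "v \<in> H" "0 \<le> t" "t \<le> 1" for u v t
    by (rule convexD[OF H that(1,2)]) (use that in auto)
  obtain p where P: "(p,y) \<in> H" and xp: "x \<le> p"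
  proof (cases "y \<le> sv - a")
    case True
    show ?thesis
    proof (cases "sv = a")
      case True
      then have "y = 0" using \<open>y \<le> sv - a\<close> y0 by simp
      then show ?thesis using that[of a] A xa by simp
    next
      case False
      then have d: "0 < sv - a" using as by simp
      define t where "t = y/(sv-a)"
      have t: "0 \<le> t" "t \<le> 1" unfolding t_def using d y0 True by auto
      have ty: "t*(sv-a) = y" unfolding t_def using d by simp
      have "(1-t) *\<^sub>R (a,0) + t *\<^sub>R (a,sv-a) = (a,y)"
        using ty by (simp add: algebra_simps)
      then show ?thesis using that[of a] seg[OF A C1 t] xa by simp
    qed
  next
    case False
    then have d: "0 < b - (sv - a)" using yb by simp
    define t where "t = (y - (sv-a))/(b-(sv-a))"
    have t: "0 \<le> t" "t \<le> 1" unfolding t_def using d yb False by auto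
    have ty: "t*(b-(sv-a)) = y - (sv-a)" unfolding t_def using d by simp
    have c1: "(1-t)*a + t*(sv-b) = sv - y"
    proof -
      have "(1-t)*a + t*(sv-b) = a - t*(b-(sv-a))" by (simp add: algebra_simps)
      then show ?thesis using ty by simp
    qed
    have c2: "(1-t)*(sv-a) + t*b = y"
    proof -
      have "(1-t)*(sv-a) + t*b = (sv-a) + t*(b-(sv-a))" by (simp add: algebra_simps)
      then show ?thesis using ty by simp
    qed
    have "(1-t) *\<^sub>R (a,sv-a) + t *\<^sub>R (sv-b,b) = (sv-y,y)"
      using c1 c2 by simp
    then show ?thesis using that[of "sv-y"] seg[OF C1 C2 t] xys by simp
  qed
  have Q: "(0,y) \<in> H"
  proof -
    define t where "t = y/b"
    have t: "0 \<le> t" "t \<le> 1" unfolding t_def using b0 y0 yb by auto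
    have "(1-t) *\<^sub>R (0,0) + t *\<^sub>R (0,b) = (0::real,y)"
      unfolding t_def using b0 by simp
    then show ?thesis using seg[OF O B t] by simp
  qed
  show ?thesis
  proof (cases "p = 0")
    case True
    then have "x = 0" using xp x0 by simp
    then show ?thesis using Q by simp
  next
    case False
    then have p0: "0 < p" using xp x0 by simp
    define t where "t = x/p"
    have t: "0 \<le> t" "t \<le> 1" unfolding t_def using p0 x0 xp by auto
    have "(1-t) *\<^sub>R (0,y) + t *\<^sub>R (p,y) = (x,y)"
      unfolding t_def using p0 by (simp add: field_simps)
    then show ?thesis using seg[OF Q P t] by simp
  qed
qed

definition gen_set :: "real \<Rightarrow> real \<Rightarrow> real \<Rightarrow> (real \<Rightarrow> real) \<Rightarrow> (real \<Rightarrow> real) \<Rightarrow> (real \<times> real) set" where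
  "gen_set \<kappa> m \<eta> nA nB = {(R1, R2). 0 \<le> R1 \<and> 0 \<le> R2 \<and>
     ennreal R1 \<le> freq_integral (\<lambda>\<omega>. \<kappa> * ln (1 + m * \<eta> * nA \<omega>)) \<and>
     ennreal R2 \<le> freq_integral (\<lambda>\<omega>. \<kappa> * ln (1 + m * (1 - \<eta>) * nB \<omega>)) \<and>
     ennreal (R1 + R2) \<le> freq_integral (\<lambda>\<omega>. \<kappa> * ln (1 + m * \<eta> * nA \<omega> + m * (1 - \<eta>) * nB \<omega>))}"

lemma gen_region:
  fixes \<kappa> m hbar \<eta> PA PB :: real
  assumes k0: "0 < \<kappa>" and m0: "0 < m" and km: "\<kappa>^2 * m = 1" and h0: "0 < hbar"
    and e0: "0 < \<eta>" and e1: "\<eta> < 1" and PA: "0 < PA" and PB: "0 < PB"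
  shows "convex hull (\<Union> {gen_set \<kappa> m \<eta> nA nB | nA nB. admissible hbar PA nA \<and> admissible hbar PB nB}) =
           {(R1, R2). 0 \<le> R1 \<and> 0 \<le> R2 \<and>
              R1 \<le> sqrt (\<eta> * PA / (pi * hbar)) \<and>
              R2 \<le> sqrt ((1 - \<eta>) * PB / (pi * hbar)) \<and>
              R1 + R2 \<le> sqrt ((\<eta> * PA + (1 - \<eta>) * PB) / (pi * hbar))}"
    (is "convex hull ?U = ?D")
proof -
  define a where "a = sqrt (\<eta> * PA / (pi * hbar))"
  define b where "b = sqrt ((1 - \<eta>) * PB / (pi * hbar))"
  define sv where "sv = sqrt ((\<eta> * PA + (1 - \<eta>) * PB) / (pi * hbar))"
  have e1': "0 < 1 - \<eta>" using e1 by simp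
  have a0: "0 < a" unfolding a_def using e0 PA h0 by simp
  have b0: "0 < b" unfolding b_def using e1' PB h0 by simp
  have as: "a \<le> sv" unfolding a_def sv_def using e1' PB h0
    by (intro real_sqrt_le_mono divide_right_mono) auto
  have bs: "b \<le> sv" unfolding b_def sv_def using e0 PA h0
    by (intro real_sqrt_le_mono divide_right_mono) auto
  have sab: "sv \<le> a + b"
  proof -
    have "sv = sqrt (\<eta> * PA / (pi * hbar) + (1 - \<eta>) * PB / (pi * hbar))"
      unfolding sv_def by (simp add: add_divide_distrib)
    also have "\<dots> \<le> a + b" unfolding a_def b_def by (rule sqrt_add_le_add_sqrt) (use e0 e1' PA PB h0 in simp_all)
    finally show ?thesis .
  qed
  have D: "?D = {(R1, R2). 0 \<le> R1 \<and> 0 \<le> R2 \<and> R1 \<le> a \<and> R2 \<le> b \<and> R1 + R2 \<le> sv}"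
    unfolding a_def b_def sv_def ..
  have Dconv: "convex ?D"
    unfolding D
  proof (rule convexI)
    fix p q :: "real \<times> real" and u v :: real
    assume p: "p \<in> {(R1, R2). 0 \<le> R1 \<and> 0 \<le> R2 \<and> R1 \<le> a \<and> R2 \<le> b \<and> R1 + R2 \<le> sv}"
      and q: "q \<in> {(R1, R2). 0 \<le> R1 \<and> 0 \<le> R2 \<and> R1 \<le> a \<and> R2 \<le> b \<and> R1 + R2 \<le> sv}"
      and u: "0 \<le> u" and v: "0 \<le> v" and uv: "u + v = 1"
    obtain x1 y1 where p1: "p = (x1,y1)" by (cases p)
    obtain x2 y2 where q1: "q = (x2,y2)" by (cases q)
    have h: "0 \<le> x1" "0 \<le> y1" "x1 \<le> a" "y1 \<le> b" "x1 + y1 \<le> sv" "0 \<le> x2" "0 \<le> y2" "x2 \<le> a"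
      "y2 \<le> b" "x2 + y2 \<le> sv" using p q unfolding p1 q1 by auto
    have "u * (x1 + y1) + v * (x2 + y2) \<le> sv" by (rule convex_bound_le) (use h u v uv in auto)
    then show "u *\<^sub>R p + v *\<^sub>R q \<in> {(R1, R2). 0 \<le> R1 \<and> 0 \<le> R2 \<and> R1 \<le> a \<and> R2 \<le> b \<and> R1 + R2 \<le> sv}"
      unfolding p1 q1 using h u v uv convex_bound_le[of x1 a x2 u v] convex_bound_le[of y1 b y2 u v]
      by (simp add: algebra_simps)
  qed
  have UD: "?U \<subseteq> ?D"
  proof
    fix p assume "p \<in> ?U"
    then obtain nA nB where adA: "admissible hbar PA nA" and adB: "admissible hbar PB nB"
      and p: "p \<in> gen_set \<kappa> m \<eta> nA nB" by blast
    have nAm[measurable]: "nA \<in> borel_measurable borel" and nAn: "\<And>\<omega>. 0<\<omega> \<Longrightarrow> 0 \<le> nA \<omega>"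
      and pA: "freq_integral (\<lambda>\<omega>. hbar*\<omega>*nA \<omega>) \<le> ennreal PA"
      using adA unfolding admissible_def by auto
    have nBm[measurable]: "nB \<in> borel_measurable borel" and nBn: "\<And>\<omega>. 0<\<omega> \<Longrightarrow> 0 \<le> nB \<omega>"
      and pB: "freq_integral (\<lambda>\<omega>. hbar*\<omega>*nB \<omega>) \<le> ennreal PB"
      using adB unfolding admissible_def by auto
    have IA: "freq_integral (\<lambda>\<omega>. \<kappa> * ln (1 + m * \<eta> * nA \<omega>)) \<le> ennreal a"
    proof -
      have "freq_integral (\<lambda>\<omega>. \<kappa> * ln (1 + m * \<eta> * nA \<omega>)) \<le> ennreal (\<kappa> * sqrt (m*\<eta>*PA/(hbar*pi)))"
        using gen_ub[OF nAm nAn pA PA h0 mult_pos_pos[OF m0 e0] k0] .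
      also have "m*\<eta>*PA/(hbar*pi) = m * (\<eta> * PA / (pi * hbar))" by (simp add: field_simps)
      also have "\<kappa> * sqrt (m * (\<eta> * PA / (pi * hbar))) = a"
        unfolding a_def by (rule kappa_sqrt[OF k0 km]) (use e0 PA h0 in simp)
      finally show ?thesis .
    qed
    have IB: "freq_integral (\<lambda>\<omega>. \<kappa> * ln (1 + m * (1-\<eta>) * nB \<omega>)) \<le> ennreal b"
    proof -
      have "freq_integral (\<lambda>\<omega>. \<kappa> * ln (1 + m * (1-\<eta>) * nB \<omega>)) \<le> ennreal (\<kappa> * sqrt (m*(1-\<eta>)*PB/(hbar*pi)))"
        using gen_ub[OF nBm nBn pB PB h0 mult_pos_pos[OF m0 e1'] k0] .
      also have "m*(1-\<eta>)*PB/(hbar*pi) = m * ((1-\<eta>) * PB / (pi * hbar))" by (simp add: field_simps)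
      also have "\<kappa> * sqrt (m * ((1-\<eta>) * PB / (pi * hbar))) = b"
        unfolding b_def by (rule kappa_sqrt[OF k0 km]) (use e1' PB h0 in simp)
      finally show ?thesis .
    qed
    define nS where "nS = (\<lambda>\<omega>. \<eta> * nA \<omega> + (1-\<eta>) * nB \<omega>)"
    have nSm[measurable]: "nS \<in> borel_measurable borel" unfolding nS_def by measurable
    have nSn: "0 \<le> nS \<omega>" if "0 < \<omega>" for \<omega>
      unfolding nS_def using nAn[OF that] nBn[OF that] e0 e1' by simp
    have pS: "freq_integral (\<lambda>\<omega>. hbar*\<omega>*nS \<omega>) \<le> ennreal (\<eta>*PA + (1-\<eta>)*PB)"
    proof -
      have "freq_integral (\<lambda>\<omega>. hbar*\<omega>*nS \<omega>)
          = freq_integral (\<lambda>\<omega>. \<eta> * (hbar*\<omega>*nA \<omega>) + (1-\<eta>) * (hbar*\<omega>*nB \<omega>))"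
        unfolding nS_def by (intro arg_cong[where f=freq_integral]) (auto simp: fun_eq_iff algebra_simps)
      also have "\<dots> = freq_integral (\<lambda>\<omega>. \<eta> * (hbar*\<omega>*nA \<omega>)) + freq_integral (\<lambda>\<omega>. (1-\<eta>) * (hbar*\<omega>*nB \<omega>))"
        by (rule freq_add) (use e0 e1' h0 nAn nBn in auto)
      also have "\<dots> = ennreal \<eta> * freq_integral (\<lambda>\<omega>. hbar*\<omega>*nA \<omega>) + ennreal (1-\<eta>) * freq_integral (\<lambda>\<omega>. hbar*\<omega>*nB \<omega>)"
        using e0 e1' by (simp add: freq_cmult)
      also have "\<dots> \<le> ennreal \<eta> * ennreal PA + ennreal (1-\<eta>) * ennreal PB"
        by (intro add_mono mult_left_mono pA pB) auto
      also have "\<dots> = ennreal (\<eta>*PA + (1-\<eta>)*PB)"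
        using e0 e1' PA PB by (simp add: ennreal_mult'[symmetric])
      finally show ?thesis .
    qed
    have IS: "freq_integral (\<lambda>\<omega>. \<kappa> * ln (1 + m * \<eta> * nA \<omega> + m * (1 - \<eta>) * nB \<omega>)) \<le> ennreal sv"
    proof -
      have "(\<lambda>\<omega>. \<kappa> * ln (1 + m * \<eta> * nA \<omega> + m * (1 - \<eta>) * nB \<omega>)) = (\<lambda>\<omega>. \<kappa> * ln (1 + m * nS \<omega>))"
        unfolding nS_def by (auto simp: fun_eq_iff algebra_simps)
      moreover have "freq_integral (\<lambda>\<omega>. \<kappa> * ln (1 + m * nS \<omega>)) \<le> ennreal (\<kappa> * sqrt (m*(\<eta>*PA + (1-\<eta>)*PB)/(hbar*pi)))"
        using gen_ub[OF nSm nSn pS add_pos_pos[OF mult_pos_pos[OF e0 PA] mult_pos_pos[OF e1' PB]] h0 m0 k0] .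
      moreover have "m*(\<eta>*PA + (1-\<eta>)*PB)/(hbar*pi) = m * ((\<eta>*PA + (1-\<eta>)*PB) / (pi * hbar))" by (simp add: field_simps)
      moreover have "\<kappa> * sqrt (m * ((\<eta>*PA + (1-\<eta>)*PB) / (pi * hbar))) = sv"
        unfolding sv_def by (rule kappa_sqrt[OF k0 km]) (use e0 e1' PA PB h0 in simp)
      ultimately show ?thesis by simp
    qed
    obtain R1 R2 where pR: "p = (R1,R2)" by (cases p)
    from p have r: "0 \<le> R1" "0 \<le> R2" "ennreal R1 \<le> freq_integral (\<lambda>\<omega>. \<kappa> * ln (1 + m * \<eta> * nA \<omega>))"
      "ennreal R2 \<le> freq_integral (\<lambda>\<omega>. \<kappa> * ln (1 + m * (1-\<eta>) * nB \<omega>))"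
      "ennreal (R1+R2) \<le> freq_integral (\<lambda>\<omega>. \<kappa> * ln (1 + m * \<eta> * nA \<omega> + m * (1 - \<eta>) * nB \<omega>))"
      unfolding gen_set_def pR by auto
    have "R1 \<le> a" using order_trans[OF r(3) IA] a0 by simp
    moreover have "R2 \<le> b" using order_trans[OF r(4) IB] b0 by simp
    moreover have "R1 + R2 \<le> sv" using order_trans[OF r(5) IS] as a0 by simp
    ultimately show "p \<in> ?D" unfolding D pR using r by simp
  qed
  have hullD: "convex hull ?U \<subseteq> ?D" by (intro hull_minimal UD Dconv)
  obtain nA nB where adA: "admissible hbar PA nA" and adB: "admissible hbar PB nB"
    and rA: "freq_integral (\<lambda>\<omega>. \<kappa> * ln (1 + m*\<eta>*nA \<omega>)) = ennreal a"
    and rB: "ennreal (sv - a) \<le> freq_integral (\<lambda>\<omega>. \<kappa> * ln (1 + m*(1-\<eta>)*nB \<omega>))"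
    and rS: "freq_integral (\<lambda>\<omega>. \<kappa> * ln (1 + m*\<eta>*nA \<omega> + m*(1-\<eta>)*nB \<omega>)) = ennreal sv"
    using corner[OF k0 m0 km h0 e0 e1' PA PB] unfolding a_def sv_def by blast
  have eqs: "sqrt (((1-\<eta>)*PB + \<eta>*PA)/(pi*hbar)) = sv" unfolding sv_def by (simp add: add.commute)
  obtain nB' nA' where adB': "admissible hbar PB nB'" and adA': "admissible hbar PA nA'"
    and rB': "freq_integral (\<lambda>\<omega>. \<kappa> * ln (1 + m*(1-\<eta>)*nB' \<omega>)) = ennreal b"
    and rA': "ennreal (sv - b) \<le> freq_integral (\<lambda>\<omega>. \<kappa> * ln (1 + m*\<eta>*nA' \<omega>))"
    and rS': "freq_integral (\<lambda>\<omega>. \<kappa> * ln (1 + m*(1-\<eta>)*nB' \<omega> + m*\<eta>*nA' \<omega>)) = ennreal sv"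
    using corner[OF k0 m0 km h0 e1' e0 PB PA] unfolding eqs b_def[symmetric] by blast
  have rS'': "freq_integral (\<lambda>\<omega>. \<kappa> * ln (1 + m*\<eta>*nA' \<omega> + m*(1-\<eta>)*nB' \<omega>)) = ennreal sv"
    using rS' by (simp add: ac_simps)
  have G1: "gen_set \<kappa> m \<eta> nA nB \<subseteq> convex hull ?U" using adA adB by (intro subset_trans[OF _ hull_subset]) blast
  have G2: "gen_set \<kappa> m \<eta> nA' nB' \<subseteq> convex hull ?U" using adA' adB' by (intro subset_trans[OF _ hull_subset]) blast
  have pO: "(0,0) \<in> convex hull ?U" using G1 unfolding gen_set_def by auto
  have pA: "(a,0) \<in> convex hull ?U" using G1 a0 as rA rS unfolding gen_set_def by auto
  have pC1: "(a,sv-a) \<in> convex hull ?U" using G1 a0 as rA rS rB unfolding gen_set_def by auto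
  have pC2: "(sv-b,b) \<in> convex hull ?U" using G2 b0 bs rB' rS'' rA' unfolding gen_set_def by auto
  have pB: "(0,b) \<in> convex hull ?U" using G2 b0 bs rB' rS'' unfolding gen_set_def by auto
  have "?D \<subseteq> convex hull ?U"
    unfolding D
  proof clarsimp
    fix x y assume h: "0 \<le> x" "0 \<le> y" "x \<le> a" "y \<le> b" "x + y \<le> sv"
    show "(x,y) \<in> convex hull ?U"
      by (rule pent_hull[OF convex_convex_hull pO pA pC1 pC2 pB a0 b0 as bs sab h])
  qed
  with hullD show ?thesis by blast
qed


lemma hom_eq: "homodyne_set = gen_set (1/2) 4"
  by (intro ext) (simp add: homodyne_set_def gen_set_def)

lemma het_eq: "heterodyne_set = gen_set 1 1"
  by (intro ext) (simp add: heterodyne_set_def gen_set_def)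

theorem mainTheorem6:
  fixes hbar \<eta> PA PB :: real
  assumes "0 < hbar" and "0 < \<eta>" and "\<eta> < 1" and "0 < PA" and "0 < PB"
  shows "capacity_region homodyne_set hbar \<eta> PA PB =
           {(R1, R2). 0 \<le> R1 \<and> 0 \<le> R2 \<and>
              R1 \<le> sqrt (\<eta> * PA / (pi * hbar)) \<and>
              R2 \<le> sqrt ((1 - \<eta>) * PB / (pi * hbar)) \<and>
              R1 + R2 \<le> sqrt ((\<eta> * PA + (1 - \<eta>) * PB) / (pi * hbar))} \<and>
         capacity_region heterodyne_set hbar \<eta> PA PB =
           capacity_region homodyne_set hbar \<eta> PA PB"
proof -
  have H: "capacity_region homodyne_set hbar \<eta> PA PB =
           {(R1, R2). 0 \<le> R1 \<and> 0 \<le> R2 \<and>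
              R1 \<le> sqrt (\<eta> * PA / (pi * hbar)) \<and>
              R2 \<le> sqrt ((1 - \<eta>) * PB / (pi * hbar)) \<and>
              R1 + R2 \<le> sqrt ((\<eta> * PA + (1 - \<eta>) * PB) / (pi * hbar))}"
    unfolding capacity_region_def hom_eq
    by (rule gen_region) (use assms in \<open>auto simp: power2_eq_square\<close>)
  have T: "capacity_region heterodyne_set hbar \<eta> PA PB =
           {(R1, R2). 0 \<le> R1 \<and> 0 \<le> R2 \<and>
              R1 \<le> sqrt (\<eta> * PA / (pi * hbar)) \<and>
              R2 \<le> sqrt ((1 - \<eta>) * PB / (pi * hbar)) \<and>
              R1 + R2 \<le> sqrt ((\<eta> * PA + (1 - \<eta>) * PB) / (pi * hbar))}"
    unfolding capacity_region_def het_eq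
    by (rule gen_region) (use assms in \<open>auto simp: power2_eq_square\<close>)
  show ?thesis using H T by simp
qed

end
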